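(* Let $G$ be an unweighted loopless graph on vertex set $[n]$ and let $t\ge 2$. Suppose that for all $\mathbf{a},\mathbf{b}\in\{0,1\}^n$, \[ V_{K_{t-1}}(\mathbf{a},\dots,\mathbf{a};G)\, V_{K_{t-1}}(\mathbf{b},\dots,\mathbf{b};G)\le \sum_{\phi:[t-1]\times\{1,2\}\to[n]}\ \prod_{\substack{i,j\in[t-1]\\ i\ne j}}G(\phi(i,1),\phi(j,2))\prod_{i\in[t-1]}a_{\phi(i,1)}b_{\phi(i,2)}. \] Then $\hom(K_t,G)^2\le\hom(K_t\times K_2,G)$.
   Context: $G(u,v)\in\{0,1\}$ is the adjacency indicator of $G$. For $s\ge1$ and $\mathbf{x}\in\mathbb{R}^n$, $V_{K_s}(\mathbf{x},\dots,\mathbf{x};G)=\sum_{\phi:[s]\to[n]}\prod_{\{i,j\}\in\binom{[s]}{2}}G(\phi(i),\phi(j))\prod_{r\in[s]}x_{\phi(r)}$ (an empty product is $1$). $\hom(H,G)$ is the number of homomorphisms from $H$ to $G$. The tensor product $K_t\times K_2$ has vertex set $[t]\times\{1,2\}$ with $(i,1)$ adjacent to $(j,2)$ iff $i\ne j$. *)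

theory Defs
  imports Complex_Main "HOL-Library.FuncSet"
begin

text \<open>Vertex set [n] is rendered as {..<n}. A graph is an adjacency predicate
G :: nat => nat => bool; only its values on {..<n} matter.\<close>

definition loopless_graph :: "nat \<Rightarrow> (nat \<Rightarrow> nat \<Rightarrow> bool) \<Rightarrow> bool" where
  "loopless_graph n G \<longleftrightarrow> (\<forall>u<n. \<forall>v<n. G u v = G v u) \<and> (\<forall>u<n. \<not> G u u)"

definition adjw :: "(nat \<Rightarrow> nat \<Rightarrow> bool) \<Rightarrow> nat \<Rightarrow> nat \<Rightarrow> real" where
  "adjw G u v = (if G u v then 1 else 0)"

definition VK :: "nat \<Rightarrow> nat \<Rightarrow> (nat \<Rightarrow> nat \<Rightarrow> bool) \<Rightarrow> (nat \<Rightarrow> real) \<Rightarrow> real" where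
  "VK n s G x = (\<Sum>\<phi>\<in>{..<s} \<rightarrow>\<^sub>E {..<n}.
      (\<Prod>p\<in>{(i,j). i < j \<and> j < s}. adjw G (\<phi> (fst p)) (\<phi> (snd p))) * (\<Prod>r<s. x (\<phi> r)))"

definition hom_count :: "'a set \<Rightarrow> ('a \<Rightarrow> 'a \<Rightarrow> bool) \<Rightarrow> nat \<Rightarrow> (nat \<Rightarrow> nat \<Rightarrow> bool) \<Rightarrow> nat" where
  "hom_count VH EH n G = card {\<phi> \<in> VH \<rightarrow>\<^sub>E {..<n}. \<forall>u\<in>VH. \<forall>v\<in>VH. EH u v \<longrightarrow> G (\<phi> u) (\<phi> v)}"

definition K_verts :: "nat \<Rightarrow> nat set" where "K_verts t = {..<t}"
definition K_adj :: "nat \<Rightarrow> nat \<Rightarrow> bool" where "K_adj i j \<longleftrightarrow> i \<noteq> j"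

definition KK2_verts :: "nat \<Rightarrow> (nat \<times> nat) set" where "KK2_verts t = {..<t} \<times> {1,2}"
definition KK2_adj :: "nat \<times> nat \<Rightarrow> nat \<times> nat \<Rightarrow> bool" where
  "KK2_adj p q \<longleftrightarrow> fst p \<noteq> fst q \<and> snd p \<noteq> snd q"

end

theory Submission
  imports Defs
begin

lemma ind_prod:
  assumes "finite F"
  shows "(\<Prod>x\<in>F. (if P x then 1 else 0::real)) = (if \<forall>x\<in>F. P x then 1 else 0)"
  using assms by (induction F rule: finite_induct) auto

lemma ind_mult: "(if P then 1 else 0::real) * (if Q then 1 else 0) = (if P \<and> Q then 1 else 0)"
  by auto

lemma card_sum_ind:
  assumes "finite A"
  shows "real (card {x\<in>A. P x}) = (\<Sum>x\<in>A. if P x then 1 else 0)"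
  using assms by (simp add: sum.inter_filter[symmetric])

definition CondA :: "nat \<Rightarrow> nat \<Rightarrow> (nat \<Rightarrow> nat \<Rightarrow> bool) \<Rightarrow> nat \<Rightarrow> (nat \<Rightarrow> nat) set" where
  "CondA n s G v = {\<phi>\<in>{..<s} \<rightarrow>\<^sub>E {..<n}. (\<forall>i j. i<j \<and> j<s \<longrightarrow> G (\<phi> i) (\<phi> j)) \<and> (\<forall>r<s. G v (\<phi> r))}"

lemma VK_card: "VK n s G (adjw G v) = real (card (CondA n s G v))"
proof -
  have fin: "finite {(i,j). i < j \<and> j < (s::nat)}"
    by (rule finite_subset[of _ "{..<s} \<times> {..<s}"]) auto
  have "VK n s G (adjw G v) = (\<Sum>\<phi>\<in>{..<s} \<rightarrow>\<^sub>E {..<n}. if (\<forall>i j. i<j \<and> j<s \<longrightarrow> G (\<phi> i) (\<phi> j)) \<and> (\<forall>r<s. G v (\<phi> r)) then 1 else 0)"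
    unfolding VK_def adjw_def
    apply (rule sum.cong[OF refl])
    by (simp add: ind_prod[OF fin] ind_prod ind_mult)
  also have "\<dots> = real (card (CondA n s G v))"
    unfolding CondA_def by (rule card_sum_ind[symmetric]) (simp add: finite_PiE)
  finally show ?thesis .
qed

lemma homK:
  assumes sym: "\<forall>u<n. \<forall>v<n. G u v = G v u"
  shows "hom_count (K_verts (Suc s)) K_adj n G = (\<Sum>v<n. card (CondA n s G v))"
proof -
  let ?H = "{\<phi> \<in> K_verts (Suc s) \<rightarrow>\<^sub>E {..<n}. \<forall>u\<in>K_verts (Suc s). \<forall>v\<in>K_verts (Suc s). K_adj u v \<longrightarrow> G (\<phi> u) (\<phi> v)}"
  let ?S = "Sigma {..<n} (CondA n s G)"
  have "bij_betw (\<lambda>\<phi>. (\<phi> s, restrict \<phi> {..<s})) ?H ?S"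
  proof (rule bij_betw_byWitness[where f'="\<lambda>(v,\<psi>). \<psi>(s:=v)"])
    show "\<forall>a\<in>?H. (\<lambda>(v,\<psi>). \<psi>(s:=v)) (a s, restrict a {..<s}) = a"
      by (auto simp: K_verts_def fun_eq_iff PiE_def extensional_def)
    show "\<forall>a\<in>?S. (\<lambda>\<phi>. (\<phi> s, restrict \<phi> {..<s})) ((\<lambda>(v,\<psi>). \<psi>(s:=v)) a) = a"
      by (auto simp: CondA_def fun_eq_iff PiE_def extensional_def)
    show "(\<lambda>\<phi>. (\<phi> s, restrict \<phi> {..<s})) ` ?H \<subseteq> ?S"
      by (auto simp: CondA_def K_verts_def K_adj_def PiE_iff)
    show "(\<lambda>(v,\<psi>). \<psi>(s:=v)) ` ?S \<subseteq> ?H"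
    proof
      fix x assume "x \<in> (\<lambda>(v,\<psi>). \<psi>(s:=v)) ` ?S"
      then obtain v \<psi> where x: "x = \<psi>(s:=v)" and v: "v < n" and p: "\<psi> \<in> CondA n s G v" by auto
      have r: "\<psi> r < n" if "r < s" for r using p that by (auto simp: CondA_def)
      show "x \<in> ?H" unfolding x
        using p v unfolding CondA_def K_verts_def K_adj_def
        apply (auto simp: PiE_def extensional_def)
        apply (metis less_antisym linorder_neqE_nat r sym)+
        done
    qed
  qed
  then have "card ?H = card ?S" by (rule bij_betw_same_card)
  also have "\<dots> = (\<Sum>v<n. card (CondA n s G v))"
    by (rule card_SigmaI) (auto simp: CondA_def finite_PiE)
  finally show ?thesis unfolding hom_count_def .
qed


definition CondB :: "nat \<Rightarrow> nat \<Rightarrow> (nat \<Rightarrow> nat \<Rightarrow> bool) \<Rightarrow> nat \<Rightarrow> nat \<Rightarrow> (nat \<times> nat \<Rightarrow> nat) set" where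
  "CondB n s G v w = {\<psi>\<in>({..<s} \<times> {1::nat,2}) \<rightarrow>\<^sub>E {..<n}.
     (\<forall>i<s. \<forall>j<s. i \<noteq> j \<longrightarrow> G (\<psi> (i,1)) (\<psi> (j,2))) \<and> (\<forall>i<s. G w (\<psi> (i,1)) \<and> G v (\<psi> (i,2)))}"

lemma RHS_card:
  "(\<Sum>\<phi>\<in>({..<s} \<times> {1::nat,2}) \<rightarrow>\<^sub>E {..<n}.
         (\<Prod>i<s. \<Prod>j\<in>{..<s} - {i}. adjw G (\<phi> (i,1)) (\<phi> (j,2))) *
         (\<Prod>i<s. adjw G w (\<phi> (i,1)) * adjw G v (\<phi> (i,2)))) = real (card (CondB n s G v w))"
proof -
  have "(\<Sum>\<phi>\<in>({..<s} \<times> {1::nat,2}) \<rightarrow>\<^sub>E {..<n}.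
         (\<Prod>i<s. \<Prod>j\<in>{..<s} - {i}. adjw G (\<phi> (i,1)) (\<phi> (j,2))) *
         (\<Prod>i<s. adjw G w (\<phi> (i,1)) * adjw G v (\<phi> (i,2)))) =
     (\<Sum>\<phi>\<in>({..<s} \<times> {1::nat,2}) \<rightarrow>\<^sub>E {..<n}. if (\<forall>i<s. \<forall>j<s. i \<noteq> j \<longrightarrow> G (\<phi> (i,1)) (\<phi> (j,2))) \<and> (\<forall>i<s. G w (\<phi> (i,1)) \<and> G v (\<phi> (i,2))) then 1 else 0)"
    unfolding adjw_def
    apply (rule sum.cong[OF refl])
    apply (simp add: ind_prod ind_mult)
    by blast
  also have "\<dots> = real (card (CondB n s G v w))"
    unfolding CondB_def by (rule card_sum_ind[symmetric]) (simp add: finite_PiE)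
  finally show ?thesis .
qed

lemma homKK2:
  assumes sym: "\<forall>u<n. \<forall>v<n. G u v = G v u"
  shows "hom_count (KK2_verts (Suc s)) KK2_adj n G = (\<Sum>(v,w)\<in>{..<n}\<times>{..<n}. card (CondB n s G v w))"
proof -
  let ?H = "{\<phi> \<in> KK2_verts (Suc s) \<rightarrow>\<^sub>E {..<n}. \<forall>u\<in>KK2_verts (Suc s). \<forall>v\<in>KK2_verts (Suc s). KK2_adj u v \<longrightarrow> G (\<phi> u) (\<phi> v)}"
  let ?S = "Sigma ({..<n}\<times>{..<n}) (\<lambda>(v,w). CondB n s G v w)"
  let ?f = "\<lambda>\<phi>. ((\<phi> (s,1), \<phi> (s,2)), restrict \<phi> ({..<s} \<times> {1::nat,2}))"
  let ?g = "\<lambda>((v,w),\<psi>). \<psi>((s,1):=v, (s,2):=w)"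
  have "bij_betw ?f ?H ?S"
  proof (rule bij_betw_byWitness[where f'="?g"])
    show "\<forall>a\<in>?H. ?g (?f a) = a"
      by (auto simp: KK2_verts_def fun_eq_iff PiE_def extensional_def)
    show "\<forall>a\<in>?S. ?f (?g a) = a"
      by (auto simp: CondB_def fun_eq_iff PiE_def extensional_def)
    show "?f ` ?H \<subseteq> ?S"
    proof
      fix x assume "x \<in> ?f ` ?H"
      then obtain \<phi> where x: "x = ?f \<phi>" and p: "\<phi> \<in> ?H" by blast
      have A: "\<And>i j a b. i < Suc s \<Longrightarrow> j < Suc s \<Longrightarrow> a \<in> {1,2} \<Longrightarrow> b \<in> {1,2} \<Longrightarrow> i \<noteq> j \<Longrightarrow> a \<noteq> b \<Longrightarrow> G (\<phi> (i,a)) (\<phi> (j,b))"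
        using p by (auto simp: KK2_verts_def KK2_adj_def)
      have B: "\<And>i a. i < Suc s \<Longrightarrow> a \<in> {1,2} \<Longrightarrow> \<phi> (i,a) < n"
        using p by (auto simp: KK2_verts_def PiE_iff)
      show "x \<in> ?S" unfolding x CondB_def
        using A B by auto
    qed
    show "?g ` ?S \<subseteq> ?H"
    proof
      fix x assume "x \<in> ?g ` ?S"
      then obtain v w \<psi> where x: "x = \<psi>((s,1):=v, (s,2):=w)" and v: "v < n" and w: "w < n" and p: "\<psi> \<in> CondB n s G v w" by auto
      have r: "\<psi> (i,a) < n" if "i < s" "a \<in> {1,2}" for i a using p that by (auto simp: CondB_def PiE_iff)
      have e: "\<psi> (i,a) = undefined" if "\<not> (i < s \<and> a \<in> {1,2})" for i a using p that by (auto simp: CondB_def PiE_def extensional_def)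
      have c1: "G (\<psi> (i,1)) (\<psi> (j,2))" if "i<s" "j<s" "i\<noteq>j" for i j using p that by (auto simp: CondB_def)
      have c2: "G w (\<psi> (i,1))" "G v (\<psi> (i,2))" if "i<s" for i using p that by (auto simp: CondB_def)
      have ext: "x \<in> KK2_verts (Suc s) \<rightarrow>\<^sub>E {..<n}"
        unfolding x KK2_verts_def PiE_iff using r e v w by (auto simp: extensional_def less_Suc_eq)
      have "G (x p) (x q)" if "p \<in> KK2_verts (Suc s)" "q \<in> KK2_verts (Suc s)" "KK2_adj p q" for p q
      proof -
        obtain i a where pp: "p = (i,a)" by (cases p)
        obtain j b where qq: "q = (j,b)" by (cases q)
        have ij: "i < Suc s" "j < Suc s" "i \<noteq> j" and ab: "a \<in> {1,2}" "b \<in> {1,2}" "a \<noteq> b"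
          using that by (auto simp: pp qq KK2_verts_def KK2_adj_def)
        have key: "G (x (i',1)) (x (j',2))" if "i' < Suc s" "j' < Suc s" "i' \<noteq> j'" for i' j'
          using that c1 c2 sym r v w by (auto simp: x less_Suc_eq)
        have xr: "x (i',a') < n" if "i' < Suc s" "a' \<in> {1,2}" for i' a'
          using ext that by (auto simp: KK2_verts_def PiE_iff)
        show ?thesis
        proof (cases "a = 1")
          case True then have "b = 2" using ab by auto
          then show ?thesis using True key ij pp qq by simp
        next
          case False then have "a = 2" "b = 1" using ab by auto
          then show ?thesis using key[of j i] ij pp qq sym xr[of i 2] xr[of j 1] by auto
        qed
      qed
      then show "x \<in> ?H" using ext by blast
    qed
  qed
  then have "card ?H = card ?S" by (rule bij_betw_same_card)
  also have "\<dots> = (\<Sum>a\<in>{..<n}\<times>{..<n}. card ((\<lambda>(v,w). CondB n s G v w) a))"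
    by (rule card_SigmaI) (auto simp: CondB_def finite_PiE)
  also have "\<dots> = (\<Sum>(v,w)\<in>{..<n}\<times>{..<n}. card (CondB n s G v w))"
    by (rule sum.cong) auto
  finally show ?thesis unfolding hom_count_def .
qed

theorem proposition4p4:
  fixes n t :: nat and G :: "nat \<Rightarrow> nat \<Rightarrow> bool"
  assumes "loopless_graph n G"
    and "t \<ge> 2"
    and hyp: "\<forall>a b :: nat \<Rightarrow> real. (\<forall>i<n. a i \<in> {0,1}) \<and> (\<forall>i<n. b i \<in> {0,1}) \<longrightarrow>
      VK n (t - 1) G a * VK n (t - 1) G b \<le>
      (\<Sum>\<phi>\<in>({..<t - 1} \<times> {1::nat,2}) \<rightarrow>\<^sub>E {..<n}.
         (\<Prod>i<t - 1. \<Prod>j\<in>{..<t - 1} - {i}. adjw G (\<phi> (i,1)) (\<phi> (j,2))) *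
         (\<Prod>i<t - 1. a (\<phi> (i,1)) * b (\<phi> (i,2))))"
  shows "real (hom_count (K_verts t) K_adj n G) ^ 2 \<le> real (hom_count (KK2_verts t) KK2_adj n G)"
  proof -
  obtain s where ts: "t = Suc s" using assms(2) by (cases t) auto
  have sym: "\<forall>u<n. \<forall>v<n. G u v = G v u" using assms(1) by (simp add: loopless_graph_def)
  define X where "X v = real (card (CondA n s G v))" for v
  have hK: "real (hom_count (K_verts t) K_adj n G) = (\<Sum>v<n. X v)"
    unfolding ts homK[OF sym] X_def by simp
  have hKK: "real (hom_count (KK2_verts t) KK2_adj n G) = (\<Sum>v<n. \<Sum>w<n. real (card (CondB n s G v w)))"
    unfolding ts homKK2[OF sym] by (simp add: sum.cartesian_product case_prod_beta)
  have le: "X w * X v \<le> real (card (CondB n s G v w))" for v w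
  proof -
    have "\<forall>i<n. adjw G w i \<in> {0,1}" "\<forall>i<n. adjw G v i \<in> {0,1}" by (auto simp: adjw_def)
    then have "VK n s G (adjw G w) * VK n s G (adjw G v) \<le>
      (\<Sum>\<phi>\<in>({..<s} \<times> {1::nat,2}) \<rightarrow>\<^sub>E {..<n}.
         (\<Prod>i<s. \<Prod>j\<in>{..<s} - {i}. adjw G (\<phi> (i,1)) (\<phi> (j,2))) *
         (\<Prod>i<s. adjw G w (\<phi> (i,1)) * adjw G v (\<phi> (i,2))))"
      using hyp unfolding ts by simp
    then show ?thesis unfolding RHS_card X_def VK_card .
  qed
  have "real (hom_count (K_verts t) K_adj n G) ^ 2 = (\<Sum>v<n. \<Sum>w<n. X w * X v)"
    unfolding hK power2_eq_square sum_product by (simp add: mult.commute)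
  also have "\<dots> \<le> (\<Sum>v<n. \<Sum>w<n. real (card (CondB n s G v w)))"
    by (intro sum_mono le)
  finally show ?thesis unfolding hKK .
qed

end
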